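(* Let $N\ge1$ be an integer and $a,b$ complex numbers such that all denominators below are nonzero. Then \[ B^{[N]}(a,b)=\frac{1}{N}\sum_{n=0}^N \frac{(1+n)_{N-n}}{(a+n)_{N-n}}\,\frac{(1+N-n)_n}{(b+N-n)_n}, \] where $B^{[N]}(a,b)=\dfrac{(a+b)_N\,(N-1)!}{(a)_N\,(b)_N}$.
   Context: $(x)_m=x(x+1)\cdots(x+m-1)$ denotes the rising factorial, with $(x)_0=1$. The truncated beta function is $B^{[N]}(a,b)=\frac{a+b}{ab}\prod_{n=1}^{N-1}\frac{(a+b+n)n}{(a+n)(b+n)}=\frac{(a+b)_N(N-1)!}{(a)_N(b)_N}$. *)

theory Defs
  imports Complex_Main
begin

definition trunc_beta :: "nat \<Rightarrow> complex \<Rightarrow> complex \<Rightarrow> complex" where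
  "trunc_beta N a b = pochhammer (a + b) N * of_nat (fact (N - 1)) / (pochhammer a N * pochhammer b N)"

end

theory Submission
  imports Defs
begin

lemma poch1: "n \<le> N \<Longrightarrow> pochhammer (1 + of_nat n :: complex) (N - n) = fact N / fact n"
proof -
  assume h: "n \<le> N"
  have "fact N = (fact n * pochhammer (1 + of_nat n) (N - n) :: complex)"
    using pochhammer_product[OF h, of "1::complex"] by (simp only: pochhammer_fact add.commute)
  moreover have "(fact n :: complex) \<noteq> 0" by simp
  ultimately show ?thesis by (simp add: field_simps)
qed

lemma term_eq:
  fixes a b :: complex
  assumes h: "n \<le> N" and ha: "pochhammer a N \<noteq> 0" and hb: "pochhammer b N \<noteq> 0"
  shows "pochhammer (1 + of_nat n) (N - n) / pochhammer (a + of_nat n) (N - n)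
      * (pochhammer (1 + of_nat (N - n)) n / pochhammer (b + of_nat (N - n)) n)
     = fact N / (pochhammer a N * pochhammer b N) * (of_nat (N choose n) * pochhammer a n * pochhammer b (N - n))"
proof -
  have A: "pochhammer a N = pochhammer a n * pochhammer (a + of_nat n) (N - n)"
    using pochhammer_product[OF h] .
  have h2: "N - n \<le> N" by simp
  have B: "pochhammer b N = pochhammer b (N - n) * pochhammer (b + of_nat (N - n)) n"
    using pochhammer_product[OF h2, of b] h by simp
  have C: "pochhammer (1 + of_nat (N - n) :: complex) n = fact N / fact (N - n)"
    using poch1[OF h2] h by simp
  have D: "(of_nat (N choose n) :: complex) = fact N / (fact n * fact (N - n))"
    using binomial_fact[OF h] by simp
  have a1: "pochhammer a n \<noteq> 0" "pochhammer (a + of_nat n) (N - n) \<noteq> 0" using A ha by auto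
  have b1: "pochhammer b (N - n) \<noteq> 0" "pochhammer (b + of_nat (N - n)) n \<noteq> 0" using B hb by auto
  show ?thesis unfolding poch1[OF h] C D A B using a1 b1
    by (simp add: field_simps)
qed

theorem proposition2p1:
  fixes N :: nat and a b :: complex
  assumes "N \<ge> 1"
    and "pochhammer a N \<noteq> 0" and "pochhammer b N \<noteq> 0"
    and "\<And>n. n \<le> N \<Longrightarrow> pochhammer (a + of_nat n) (N - n) \<noteq> 0"
    and "\<And>n. n \<le> N \<Longrightarrow> pochhammer (b + of_nat (N - n)) n \<noteq> 0"
  shows "trunc_beta N a b =
    (1 / of_nat N) * (\<Sum>n = 0..N.
        pochhammer (1 + of_nat n) (N - n) / pochhammer (a + of_nat n) (N - n)
      * (pochhammer (1 + of_nat (N - n)) n / pochhammer (b + of_nat (N - n)) n))"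
proof -
  have "(\<Sum>n = 0..N.
        pochhammer (1 + of_nat n) (N - n) / pochhammer (a + of_nat n) (N - n)
      * (pochhammer (1 + of_nat (N - n)) n / pochhammer (b + of_nat (N - n)) n))
    = (\<Sum>n = 0..N. fact N / (pochhammer a N * pochhammer b N) * (of_nat (N choose n) * pochhammer a n * pochhammer b (N - n)))"
  proof (rule sum.cong)
    fix x assume "x \<in> {0..N}"
    then show "pochhammer (1 + of_nat x) (N - x) / pochhammer (a + of_nat x) (N - x)
      * (pochhammer (1 + of_nat (N - x)) x / pochhammer (b + of_nat (N - x)) x)
      = fact N / (pochhammer a N * pochhammer b N) * (of_nat (N choose x) * pochhammer a x * pochhammer b (N - x))"
      using term_eq[of x N a b] assms(2,3) by simp
  qed simp
  also have "\<dots> = fact N / (pochhammer a N * pochhammer b N) * pochhammer (a + b) N"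
    by (simp only: sum_distrib_left[symmetric] pochhammer_binomial_sum atLeast0AtMost)
  finally have S: "(\<Sum>n = 0..N.
        pochhammer (1 + of_nat n) (N - n) / pochhammer (a + of_nat n) (N - n)
      * (pochhammer (1 + of_nat (N - n)) n / pochhammer (b + of_nat (N - n)) n))
    = fact N / (pochhammer a N * pochhammer b N) * pochhammer (a + b) N" .
  have F: "(fact N :: complex) = of_nat N * of_nat (fact (N - 1))"
    using assms(1) by (cases N) (auto simp: fact_Suc)
  show ?thesis unfolding S trunc_beta_def F using assms(1-3)
    by (simp add: field_simps)
qed

end
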